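(* Suppose $K\in\mathbb{K}$ and let $K'=K-2\eta\,(R+B^T\mathcal{E}(P^K)B)^{-1}L^K$, i.e. $K_i'=K_i-2\eta(R_i+B_i^T\mathcal{E}_i(P^K)B_i)^{-1}L_i^K$ for each $i$. If $0<\eta\le\frac12$, then $K'\in\mathbb{K}$.
   Context: Let $N_s\ge 1$, $\Omega=\{1,\dots,N_s\}$; tuples $V=(V_1,\dots,V_{N_s})$ of matrices are combined componentwise. Markovian jump linear system: $x_{t+1}=A_{\omega(t)}x_t+B_{\omega(t)}u_t$, $A_i\in\mathbb{R}^{d\times d}$, $B_i\in\mathbb{R}^{d\times k}$; $\{\omega(t)\}$ is a time-homogeneous Markov chain on $\Omega$ with transition probabilities $p_{ij}$ and initial distribution $\pi$ with $\pi_i>0$; $x_0$ is random, independent of the chain, with $\mathbb{E}[x_0x_0^T]\succ0$. The system is mean-square stabilizable. $Q=(Q_i)\succ0$, $R=(R_i)\succ0$. For $K=(K_i)$, $K_i\in\mathbb{R}^{k\times d}$, $u_t=-K_{\omega(t)}x_t$ and $C(K)=\mathbb{E}[\sum_{t\ge0}x_t^TQ_{\omega(t)}x_t+u_t^TR_{\omega(t)}u_t]$. $\mathbb{K}$ is the set of $K$ making the closed loop $x_{t+1}=(A_{\omega(t)}-B_{\omega(t)}K_{\omega(t)})x_t$ mean-square stable ($\mathbb{E}[x_tx_t^T]\to0$ for all initial conditions). $\mathcal{E}_i(V)=\sum_jp_{ij}V_j$. For $K\in\mathbb{K}$, $P^K$ is the unique solution of $P_i^K=Q_i+K_i^TR_iK_i+(A_i-B_iK_i)^T\mathcal{E}_i(P^K)(A_i-B_iK_i)$,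 and $L_i^K=(R_i+B_i^T\mathcal{E}_i(P^K)B_i)K_i-B_i^T\mathcal{E}_i(P^K)A_i$. *)

theory Defs
  imports "HOL-Analysis.Analysis"
begin

text \<open>Modes are the elements of a finite type 'm
(playing the role of Omega = {1..N_s}); the state dimension d is the finite type 'd,
the input dimension k is the finite type 'k.\<close>

definition psd :: "real^'n^'n \<Rightarrow> bool" where
  "psd M \<longleftrightarrow> transpose M = M \<and> (\<forall>x. 0 \<le> x \<bullet> (M *v x))"

definition pd :: "real^'n^'n \<Rightarrow> bool" where
  "pd M \<longleftrightarrow> transpose M = M \<and> (\<forall>x. x \<noteq> 0 \<longrightarrow> 0 < x \<bullet> (M *v x))"

definition stochastic :: "('m::finite \<Rightarrow> 'm \<Rightarrow> real) \<Rightarrow> bool" where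
  "stochastic p \<longleftrightarrow> (\<forall>i j. 0 \<le> p i j) \<and> (\<forall>i. (\<Sum>j\<in>UNIV. p i j) = 1)"

definition Eop :: "('m::finite \<Rightarrow> 'm \<Rightarrow> real) \<Rightarrow> ('m \<Rightarrow> real^'n^'n) \<Rightarrow> 'm \<Rightarrow> real^'n^'n" where
  "Eop p V i = (\<Sum>j\<in>UNIV. p i j *\<^sub>R V j)"

definition Acl :: "('m \<Rightarrow> real^'d^'d) \<Rightarrow> ('m \<Rightarrow> real^'k^'d) \<Rightarrow> ('m \<Rightarrow> real^'d^'k) \<Rightarrow> 'm \<Rightarrow> real^'d^'d" where
  "Acl A B K i = A i - B i ** K i"

text \<open>Second moments X_j(t) = E[x_t x_t^T 1{omega(t) = j}] of the closed loop
x_{t+1} = (A_{omega(t)} - B_{omega(t)} K_{omega(t)}) x_t, given their initial values X0.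
By the Markov property: X_j(t+1) = sum_i p_ij (A_i - B_i K_i) X_i(t) (A_i - B_i K_i)^T,
and E[x_t x_t^T] = sum_j X_j(t).\<close>
primrec moment :: "('m::finite \<Rightarrow> 'm \<Rightarrow> real) \<Rightarrow> ('m \<Rightarrow> real^'d^'d) \<Rightarrow> ('m \<Rightarrow> real^'k^'d)
    \<Rightarrow> ('m \<Rightarrow> real^'d^'k) \<Rightarrow> ('m \<Rightarrow> real^'d^'d) \<Rightarrow> nat \<Rightarrow> 'm \<Rightarrow> real^'d^'d" where
  "moment p A B K X0 0 = X0"
| "moment p A B K X0 (Suc t) = (\<lambda>j. \<Sum>i\<in>UNIV. p i j *\<^sub>R
      (Acl A B K i ** moment p A B K X0 t i ** transpose (Acl A B K i)))"

text \<open>Mean-square stability of the closed loop: E[x_t x_t^T] -> 0 for every initial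
condition, i.e. for every joint law of (x_0, omega(0)), i.e. every tuple of psd initial
second moments X0_i = E[x_0 x_0^T 1{omega(0)=i}].  The set \<open>\<bbbK>\<close> of the paper is
{K. ms_stable p A B K}.\<close>
definition ms_stable :: "('m::finite \<Rightarrow> 'm \<Rightarrow> real) \<Rightarrow> ('m \<Rightarrow> real^'d^'d) \<Rightarrow> ('m \<Rightarrow> real^'k^'d)
    \<Rightarrow> ('m \<Rightarrow> real^'d^'k) \<Rightarrow> bool" where
  "ms_stable p A B K \<longleftrightarrow>
     (\<forall>X0. (\<forall>i. psd (X0 i)) \<longrightarrow> ((\<lambda>t. \<Sum>i\<in>UNIV. moment p A B K X0 t i) \<longlonglongrightarrow> 0))"

text \<open>P^K: the (unique, for K mean-square stabilizing) solution of the coupled Lyapunov equation.\<close>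
definition PK :: "('m::finite \<Rightarrow> 'm \<Rightarrow> real) \<Rightarrow> ('m \<Rightarrow> real^'d^'d) \<Rightarrow> ('m \<Rightarrow> real^'k^'d)
    \<Rightarrow> ('m \<Rightarrow> real^'d^'d) \<Rightarrow> ('m \<Rightarrow> real^'k^'k) \<Rightarrow> ('m \<Rightarrow> real^'d^'k) \<Rightarrow> 'm \<Rightarrow> real^'d^'d" where
  "PK p A B Q R K = (THE P. \<forall>i. P i = Q i + transpose (K i) ** R i ** K i
      + transpose (Acl A B K i) ** Eop p P i ** Acl A B K i)"

definition LK :: "('m::finite \<Rightarrow> 'm \<Rightarrow> real) \<Rightarrow> ('m \<Rightarrow> real^'d^'d) \<Rightarrow> ('m \<Rightarrow> real^'k^'d)
    \<Rightarrow> ('m \<Rightarrow> real^'d^'d) \<Rightarrow> ('m \<Rightarrow> real^'k^'k) \<Rightarrow> ('m \<Rightarrow> real^'d^'k) \<Rightarrow> 'm \<Rightarrow> real^'d^'k" where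
  "LK p A B Q R K i =
     (R i + transpose (B i) ** Eop p (PK p A B Q R K) i ** B i) ** K i
     - transpose (B i) ** Eop p (PK p A B Q R K) i ** A i"

end

theory Submission
  imports Defs
begin

definition Tst :: "('m::finite \<Rightarrow> 'm \<Rightarrow> real) \<Rightarrow> ('m \<Rightarrow> real^'d^'d) \<Rightarrow> ('m \<Rightarrow> real^'d^'d) \<Rightarrow> 'm \<Rightarrow> real^'d^'d" where
  "Tst p M Y i = transpose (M i) ** Eop p Y i ** M i"

definition Tmom :: "('m::finite \<Rightarrow> 'm \<Rightarrow> real) \<Rightarrow> ('m \<Rightarrow> real^'d^'d) \<Rightarrow> ('m \<Rightarrow> real^'d^'d) \<Rightarrow> 'm \<Rightarrow> real^'d^'d" where
  "Tmom p M X = (\<lambda>j. \<Sum>i\<in>UNIV. p i j *\<^sub>R (M i ** X i ** transpose (M i)))"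

definition fr :: "('m::finite \<Rightarrow> real^'d^'d) \<Rightarrow> ('m \<Rightarrow> real^'d^'d) \<Rightarrow> real" where
  "fr Y X = (\<Sum>i\<in>UNIV. trace (transpose (Y i) ** X i))"

lemma inner_transpose_mv: "inner (a::real^'n) (transpose M *v w) = inner (M *v a) w"
  by (metis dot_lmul_matrix inner_commute transpose_matrix_vector)

lemma Eop_mv: "Eop p Y i *v v = (\<Sum>j\<in>UNIV. p i j *\<^sub>R (Y j *v v))"
proof -
  have "\<And>r. (\<Sum>k\<in>UNIV. (\<Sum>j\<in>UNIV. p i j * Y j $ r $ k) * v $ k) = (\<Sum>j\<in>UNIV. p i j * (\<Sum>k\<in>UNIV. Y j $ r $ k * v $ k))"
    by (simp add: sum_distrib_left sum_distrib_right mult.assoc) (rule sum.swap)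
  then show ?thesis by (simp add: Eop_def vec_eq_iff matrix_vector_mult_def)
qed


lemma Tst_bil: "inner a (Tst p M Y i *v b) = (\<Sum>j\<in>UNIV. p i j * inner (M i *v a) (Y j *v (M i *v b)))"
  by (simp add: Tst_def matrix_vector_mul_assoc[symmetric] inner_transpose_mv Eop_mv inner_sum_right
       del: transpose_matrix_vector)

lemma moment_eq: "moment p A B K X0 t = (Tmom p (Acl A B K) ^^ t) X0"
  by (induction t) (simp_all add: Tmom_def)

lemma tr2_entries: "trace (transpose (Y::real^'n^'n) ** Z) = (\<Sum>k\<in>UNIV. \<Sum>l\<in>UNIV. Y$l$k * Z$l$k)"
  by (simp add: trace_def matrix_matrix_mult_def transpose_def)

lemma tr2_sum_right: "trace (transpose (Y::real^'n^'n) ** (\<Sum>j\<in>S. c j *\<^sub>R Z j)) = (\<Sum>j\<in>S. c j * trace (transpose Y ** Z j))"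
proof -
  have "(\<Sum>k\<in>UNIV. \<Sum>l\<in>UNIV. Y$l$k * (\<Sum>j\<in>S. c j * Z j $l$k)) = (\<Sum>k\<in>UNIV. \<Sum>l\<in>UNIV. \<Sum>j\<in>S. c j * (Y$l$k * Z j $l$k))"
    by (simp add: sum_distrib_left mult.left_commute)
  also have "... = (\<Sum>k\<in>UNIV. \<Sum>j\<in>S. \<Sum>l\<in>UNIV. c j * (Y$l$k * Z j $l$k))"
    by (rule sum.cong[OF refl], rule sum.swap)
  also have "... = (\<Sum>j\<in>S. \<Sum>k\<in>UNIV. \<Sum>l\<in>UNIV. c j * (Y$l$k * Z j $l$k))"
    by (rule sum.swap)
  finally show ?thesis by (simp add: tr2_entries sum_distrib_left)
qed

lemma tr2_sum_left: "trace (transpose (\<Sum>j\<in>S. c j *\<^sub>R Y j) ** (Z::real^'n^'n)) = (\<Sum>j\<in>S. c j * trace (transpose (Y j) ** Z))"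
proof -
  have "(\<Sum>k\<in>UNIV. \<Sum>l\<in>UNIV. (\<Sum>j\<in>S. c j * Y j $l$k) * Z $l$k) = (\<Sum>k\<in>UNIV. \<Sum>l\<in>UNIV. \<Sum>j\<in>S. c j * (Y j$l$k * Z $l$k))"
    by (simp add: sum_distrib_right mult.assoc)
  also have "... = (\<Sum>k\<in>UNIV. \<Sum>j\<in>S. \<Sum>l\<in>UNIV. c j * (Y j$l$k * Z $l$k))"
    by (rule sum.cong[OF refl], rule sum.swap)
  also have "... = (\<Sum>j\<in>S. \<Sum>k\<in>UNIV. \<Sum>l\<in>UNIV. c j * (Y j$l$k * Z $l$k))"
    by (rule sum.swap)
  finally show ?thesis by (simp add: tr2_entries sum_distrib_left)
qed

lemma tr2_core: "trace (transpose Y ** (M ** X ** transpose M)) = trace (transpose (transpose M ** Y ** (M::real^'n^'n)) ** X)"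
proof -
  have "trace (transpose Y ** (M ** X ** transpose M)) = trace ((transpose Y ** M ** X) ** transpose M)"
    by (simp add: matrix_mul_assoc)
  also have "... = trace (transpose M ** (transpose Y ** M ** X))" by (rule trace_mul_sym)
  also have "... = trace (transpose (transpose M ** Y ** M) ** X)"
    by (simp add: matrix_transpose_mul matrix_mul_assoc)
  finally show ?thesis .
qed

lemma matrix_add_rdistrib': "((B + C) ** A) = (B ** A) + (C ** A)"
  by (vector matrix_matrix_mult_def sum.distrib[symmetric] field_simps)

lemma sandwich_sum: "finite S \<Longrightarrow> (A::real^'n^'n) ** (\<Sum>j\<in>S. c j *\<^sub>R Y j) ** B = (\<Sum>j\<in>S. c j *\<^sub>R (A ** Y j ** B))"
proof (induction S rule: finite_induct)
  case empty then show ?case by simp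
next
  case (insert x F)
  then show ?case
    by (simp add: matrix_add_ldistrib matrix_add_rdistrib' matrix_scalar_ac scalar_matrix_assoc[symmetric])
qed

lemma fr_dual: "fr Y (Tmom p M X) = fr (Tst p M Y) X"
proof -
  have "fr Y (Tmom p M X) = (\<Sum>j\<in>UNIV. \<Sum>i\<in>UNIV. p i j * trace (transpose (Y j) ** (M i ** X i ** transpose (M i))))"
    by (simp add: fr_def Tmom_def tr2_sum_right)
  also have "... = (\<Sum>i\<in>UNIV. \<Sum>j\<in>UNIV. p i j * trace (transpose (transpose (M i) ** Y j ** M i) ** X i))"
    by (subst sum.swap) (simp add: tr2_core)
  also have "... = fr (Tst p M Y) X"
  proof -
    have "transpose (M i) ** Eop p Y i ** M i = (\<Sum>j\<in>UNIV. p i j *\<^sub>R (transpose (M i) ** Y j ** M i))" for i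
      unfolding Eop_def by (rule sandwich_sum) simp
    then show ?thesis by (simp add: fr_def Tst_def tr2_sum_left)
  qed
  finally show ?thesis .
qed

lemma fr_iter: "fr Y ((Tmom p M ^^ t) X) = fr ((Tst p M ^^ t) Y) X"
proof (induction t arbitrary: Y)
  case 0 then show ?case by simp
next
  case (Suc t)
  have "fr Y ((Tmom p M ^^ Suc t) X) = fr (Tst p M Y) ((Tmom p M ^^ t) X)"
    by (simp add: fr_dual)
  also have "... = fr ((Tst p M ^^ t) (Tst p M Y)) X" by (rule Suc.IH)
  also have "... = fr ((Tst p M ^^ Suc t) Y) X" by (simp add: funpow_Suc_right del: funpow.simps)
  finally show ?case .
qed

definition outer :: "real^'n \<Rightarrow> real^'n \<Rightarrow> real^'n^'n" where
  "outer a b = (\<chi> r s. a$r * b$s)"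

lemma transpose0: "transpose (0::'a::semiring_1^'n^'n) = 0"
  by (simp add: transpose_def vec_eq_iff)

lemma trace0: "trace (0::'a::semiring_1^'n^'n) = 0"
  by (simp add: trace_def)

lemma fr_outer: "fr (\<lambda>i. if i = j then outer a b else 0) X = inner a (X j *v b)"
proof -
  have "fr (\<lambda>i. if i = j then outer a b else 0) X = trace (transpose (outer a b) ** X j)"
    unfolding fr_def by (simp add: if_distrib if_distribR transpose0 trace0 cong: if_cong)
  also have "... = (\<Sum>k\<in>UNIV. \<Sum>l\<in>UNIV. a$l * (X j$l$k * b$k))"
    by (simp add: tr2_entries outer_def mult_ac)
  also have "... = (\<Sum>l\<in>UNIV. \<Sum>k\<in>UNIV. a$l * (X j$l$k * b$k))" by (rule sum.swap)
  also have "... = inner a (X j *v b)"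
    by (simp add: inner_vec_def matrix_vector_mult_def sum_distrib_left)
  finally show ?thesis .
qed

lemma fr_sym: "fr Y X = fr X Y"
  unfolding fr_def tr2_entries by (simp add: mult.commute)

lemma fr_Ione: "fr (\<lambda>i. mat 1) X = (\<Sum>i\<in>UNIV. trace (X i))"
  unfolding fr_def by simp

lemma dom_base: "\<exists>C\<ge>0. \<forall>i a b. \<bar>inner a ((Y::'m::finite \<Rightarrow> real^'n^'n) i *v b)\<bar> \<le> C * (inner a a + inner b b)"
proof -
  have "\<forall>i. \<exists>K>0. \<forall>x. norm (Y i *v x) \<le> norm x * K"
    using bounded_linear.pos_bounded[OF matrix_vector_mul_bounded_linear] by blast
  then obtain Kf where Kf: "\<And>i. Kf i > 0" "\<And>i x. norm (Y i *v x) \<le> norm x * Kf i"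
    by metis
  define C where "C = (\<Sum>i\<in>UNIV. Kf i)"
  have C0: "C \<ge> 0" unfolding C_def using Kf(1) by (simp add: sum_nonneg less_imp_le)
  have "\<bar>inner a (Y i *v b)\<bar> \<le> C * (inner a a + inner b b)" for i a b
  proof -
    have "\<bar>inner a (Y i *v b)\<bar> \<le> norm a * norm (Y i *v b)" by (rule Cauchy_Schwarz_ineq2)
    also have "... \<le> norm a * (norm b * Kf i)" by (simp add: Kf(2) mult_left_mono)
    also have "... \<le> (inner a a + inner b b) * Kf i"
    proof -
      have "0 \<le> (norm a - norm b)^2" by simp
      then have "2 * (norm a * norm b) \<le> norm a ^ 2 + norm b ^ 2" by (simp add: power2_diff)
      moreover have "0 \<le> norm a * norm b" by simp
      ultimately have "norm a * norm b \<le> norm a ^ 2 + norm b ^ 2" by linarith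
      then show ?thesis using Kf(1)[of i]
        by (simp add: power2_norm_eq_inner mult.assoc[symmetric] mult_right_mono)
    qed
    also have "... \<le> (inner a a + inner b b) * C"
    proof -
      have "Kf i \<le> C" unfolding C_def by (rule member_le_sum) (auto intro: less_imp_le Kf(1))
      moreover have "0 \<le> inner a a + inner b b" by simp
      ultimately show ?thesis by (rule mult_left_mono)
    qed
    finally show ?thesis by (simp add: mult.commute)
  qed
  then show ?thesis using C0 by blast
qed

lemma dom:
  assumes p0: "\<forall>i j. 0 \<le> p i j"
  shows "\<exists>C. \<forall>n i a b. \<bar>inner a ((Tst p M ^^ n) Y i *v b)\<bar>
           \<le> C * (inner a ((Tst p M ^^ n) (\<lambda>_. mat 1) i *v a) + inner b ((Tst p M ^^ n) (\<lambda>_. mat 1) i *v b))"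
proof -
  obtain C where C: "C \<ge> 0" "\<And>i a b. \<bar>inner a (Y i *v b)\<bar> \<le> C * (inner a a + inner b b)"
    using dom_base[of Y] by blast
  have "\<bar>inner a ((Tst p M ^^ n) Y i *v b)\<bar>
           \<le> C * (inner a ((Tst p M ^^ n) (\<lambda>_. mat 1) i *v a) + inner b ((Tst p M ^^ n) (\<lambda>_. mat 1) i *v b))" for n i a b
  proof (induction n arbitrary: i a b)
    case 0 then show ?case using C by simp
  next
    case (Suc n)
    let ?Y = "(Tst p M ^^ n) Y" and ?Z = "(Tst p M ^^ n) (\<lambda>_. mat 1)"
    have "\<bar>inner a ((Tst p M ^^ Suc n) Y i *v b)\<bar> = \<bar>\<Sum>j\<in>UNIV. p i j * inner (M i *v a) (?Y j *v (M i *v b))\<bar>"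
      by (simp add: Tst_bil)
    also have "... \<le> (\<Sum>j\<in>UNIV. \<bar>p i j * inner (M i *v a) (?Y j *v (M i *v b))\<bar>)" by (rule sum_abs)
    also have "... \<le> (\<Sum>j\<in>UNIV. p i j * (C * (inner (M i *v a) (?Z j *v (M i *v a)) + inner (M i *v b) (?Z j *v (M i *v b)))))"
      by (rule sum_mono) (simp add: abs_mult p0 mult_left_mono Suc.IH)
    also have "... = C * (inner a ((Tst p M ^^ Suc n) (\<lambda>_. mat 1) i *v a) + inner b ((Tst p M ^^ Suc n) (\<lambda>_. mat 1) i *v b))"
      by (simp add: Tst_bil sum_distrib_left sum.distrib algebra_simps)
    finally show ?case .
  qed
  then show ?thesis by blast
qed

lemma decay_all:
  assumes p0: "\<forall>i j. 0 \<le> p i j"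
    and dec: "\<And>i a. (\<lambda>n. inner a ((Tst p M ^^ n) (\<lambda>_. mat 1) i *v a)) \<longlonglongrightarrow> 0"
  shows "(\<lambda>n. inner a ((Tst p M ^^ n) Y i *v b)) \<longlonglongrightarrow> 0"
proof -
  obtain C where C: "\<And>n i a b. \<bar>inner a ((Tst p M ^^ n) Y i *v b)\<bar>
           \<le> C * (inner a ((Tst p M ^^ n) (\<lambda>_. mat 1) i *v a) + inner b ((Tst p M ^^ n) (\<lambda>_. mat 1) i *v b))"
    using dom[OF p0] by blast
  show ?thesis
  proof (rule Lim_null_comparison)
    show "\<forall>\<^sub>F n in sequentially. norm (inner a ((Tst p M ^^ n) Y i *v b)) \<le>
       C * (inner a ((Tst p M ^^ n) (\<lambda>_. mat 1) i *v a) + inner b ((Tst p M ^^ n) (\<lambda>_. mat 1) i *v b))"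
      using C by simp
    show "(\<lambda>n. C * (inner a ((Tst p M ^^ n) (\<lambda>_. mat 1) i *v a) + inner b ((Tst p M ^^ n) (\<lambda>_. mat 1) i *v b))) \<longlonglongrightarrow> 0"
      using dec by (intro tendsto_mult_right_zero tendsto_add_zero)
  qed
qed

lemma entry_bil: "(Z::real^'n^'n) $ r $ s = inner (axis r 1) (Z *v axis s 1)"
proof -
  have "inner (axis r 1) (Z *v axis s 1) = (Z *v axis s 1) $ r" by (simp add: inner_axis')
  also have "... = Z $ r $ s"
    by (simp add: matrix_vector_mult_def axis_def if_distrib if_distribR cong: if_cong)
  finally show ?thesis by simp
qed

lemma mat_tendsto_from_bil:
  assumes "\<And>a b. (\<lambda>n. inner a ((Z n :: real^'n^'n) *v b)) \<longlonglongrightarrow> 0"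
  shows "Z \<longlonglongrightarrow> 0"
proof -
  have "(\<lambda>n. Z n $ r $ s) \<longlonglongrightarrow> 0" for r s
    unfolding entry_bil by (rule assms)
  then show ?thesis
    by (intro vec_tendstoI) simp
qed

lemma fr_tendsto:
  assumes "\<And>i. (\<lambda>t. W t i) \<longlonglongrightarrow> 0"
  shows "(\<lambda>t. fr (W t) X) \<longlonglongrightarrow> 0"
proof -
  have "(\<lambda>t. \<Sum>i\<in>UNIV. \<Sum>k\<in>UNIV. \<Sum>l\<in>UNIV. W t i $ l $ k * X i $ l $ k) \<longlonglongrightarrow> 0"
    by (intro tendsto_null_sum tendsto_mult_left_zero tendsto_vec_nth[where a=0, simplified] assms)
  then show ?thesis by (simp add: fr_def tr2_entries)
qed

lemma stable_from_decay:
  fixes M :: "'m::finite \<Rightarrow> real^'n^'n"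
  assumes p0: "\<forall>i j. 0 \<le> p i j"
    and dec: "\<And>i a. (\<lambda>n. inner a ((Tst p M ^^ n) (\<lambda>_. mat 1) i *v a)) \<longlonglongrightarrow> 0"
  shows "(\<lambda>t. (Tmom p M ^^ t) X0 j) \<longlonglongrightarrow> 0"
proof (rule mat_tendsto_from_bil)
  fix a b :: "real^'n"
  let ?Y = "\<lambda>i. if i = j then outer a b else 0"
  have "inner a ((Tmom p M ^^ t) X0 j *v b) = fr ((Tst p M ^^ t) ?Y) X0" for t
    by (simp add: fr_outer[symmetric] fr_iter)
  moreover have "(\<lambda>t. fr ((Tst p M ^^ t) ?Y) X0) \<longlonglongrightarrow> 0"
    by (intro fr_tendsto mat_tendsto_from_bil decay_all[OF p0 dec])
  ultimately show "(\<lambda>t. inner a ((Tmom p M ^^ t) X0 j *v b)) \<longlonglongrightarrow> 0" by simp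
qed

lemma trace_sum: "trace (\<Sum>j\<in>S. (X j::real^'n^'n)) = (\<Sum>j\<in>S. trace (X j))"
  unfolding trace_def by (simp add: sum.swap[of _ S])

lemma trace_tendsto: "(S \<longlonglongrightarrow> (0::real^'n^'n)) \<Longrightarrow> (\<lambda>t. trace (S t)) \<longlonglongrightarrow> 0"
  unfolding trace_def by (intro tendsto_null_sum tendsto_vec_nth[where a=0, simplified])

lemma psd_outer: "psd (outer a a)"
proof -
  have "transpose (outer a a) = outer a a"
    by (simp add: transpose_def outer_def vec_eq_iff mult.commute)
  moreover have "outer a a *v x = (inner a x) *\<^sub>R a" for x
    by (simp add: outer_def matrix_vector_mult_def vec_eq_iff inner_vec_def sum_distrib_left mult_ac)
  ultimately show ?thesis by (simp add: psd_def inner_commute)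
qed

lemma psd_zero: "psd (0::real^'n^'n)"
  by (simp add: psd_def transpose0)

lemma decay_from_stable:
  assumes st: "ms_stable p A B K"
  shows "(\<lambda>n. inner a ((Tst p (Acl A B K) ^^ n) (\<lambda>_. mat 1) i *v a)) \<longlonglongrightarrow> 0"
proof -
  let ?M = "Acl A B K"
  let ?Y = "\<lambda>j. if j = i then outer a a else 0"
  have eq: "inner a ((Tst p ?M ^^ n) (\<lambda>_. mat 1) i *v a) = trace (\<Sum>j\<in>UNIV. moment p A B K ?Y n j)" for n
  proof -
    have "inner a ((Tst p ?M ^^ n) (\<lambda>_. mat 1) i *v a) = fr ?Y ((Tst p ?M ^^ n) (\<lambda>_. mat 1))"
      by (simp add: fr_outer)
    also have "... = fr ((Tst p ?M ^^ n) (\<lambda>_. mat 1)) ?Y" by (rule fr_sym)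
    also have "... = fr (\<lambda>_. mat 1) ((Tmom p ?M ^^ n) ?Y)" by (rule fr_iter[symmetric])
    also have "... = trace (\<Sum>j\<in>UNIV. moment p A B K ?Y n j)"
      by (simp add: fr_Ione trace_sum moment_eq)
    finally show ?thesis .
  qed
  have "\<forall>j. psd (?Y j)" by (simp add: psd_outer psd_zero)
  then have "(\<lambda>n. \<Sum>j\<in>UNIV. moment p A B K ?Y n j) \<longlonglongrightarrow> 0"
    by (rule mp[OF spec[OF st[unfolded ms_stable_def]]])
  then show ?thesis unfolding eq by (rule trace_tendsto)
qed

lemma matrix_sub_ldistrib': "(A::real^'n^'m) ** (B - C) = A ** B - A ** C"
  by (vector matrix_matrix_mult_def sum_subtractf[symmetric] field_simps)

lemma matrix_sub_rdistrib': "((B::real^'n^'m) - C) ** A = B ** A - C ** A"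
  by (vector matrix_matrix_mult_def sum_subtractf[symmetric] field_simps)

lemma Eop_add: "Eop p (\<lambda>j. Y j + Z j) i = Eop p Y i + Eop p Z i"
  by (simp add: Eop_def scaleR_add_right sum.distrib)

lemma Eop_diff: "Eop p (\<lambda>j. Y j - Z j) i = Eop p Y i - Eop p Z i"
  by (simp add: Eop_def scaleR_diff_right sum_subtractf)

lemma Eop_scale: "Eop p (\<lambda>j. c *\<^sub>R Y j) i = c *\<^sub>R Eop p Y i"
  by (simp add: Eop_def scaleR_sum_right mult.commute)

lemma Tst_add: "Tst p M (\<lambda>j. Y j + Z j) i = Tst p M Y i + Tst p M Z i"
  by (simp add: Tst_def Eop_add matrix_add_ldistrib matrix_add_rdistrib')

lemma Tst_diff: "Tst p M (\<lambda>j. Y j - Z j) i = Tst p M Y i - Tst p M Z i"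
  by (simp add: Tst_def Eop_diff matrix_sub_ldistrib' matrix_sub_rdistrib')

lemma Tst_scale: "Tst p M (\<lambda>j. c *\<^sub>R Y j) i = c *\<^sub>R Tst p M Y i"
  by (simp add: Tst_def Eop_scale matrix_scalar_ac scalar_matrix_assoc[symmetric])

lemma mat_eq_from_bil:
  assumes "\<And>a b. inner a ((Z::real^'n^'n) *v b) = 0" shows "Z = 0"
proof -
  have "Z$r$s = 0" for r s using entry_bil[of Z r s] assms[of "axis r 1" "axis s 1"] by simp
  then show ?thesis by (simp add: vec_eq_iff)
qed

lemma fixed_zero:
  assumes p0: "\<forall>i j. 0 \<le> p i j"
    and dec: "\<And>i a. (\<lambda>n. inner a ((Tst p M ^^ n) (\<lambda>_. mat 1) i *v a)) \<longlonglongrightarrow> 0"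
    and fx: "\<And>i. Tst p M D i = D i"
  shows "D = (\<lambda>_. 0)"
proof -
  have fxf: "Tst p M D = D" using fx by (rule ext)
  have it: "(Tst p M ^^ n) D = D" for n by (induction n) (simp_all add: fxf)
  have "inner a (D i *v b) = 0" for i a b
  proof -
    have "(\<lambda>n. inner a ((Tst p M ^^ n) D i *v b)) \<longlonglongrightarrow> 0" by (rule decay_all[OF p0 dec])
    then have "(\<lambda>n. inner a (D i *v b)) \<longlonglongrightarrow> 0" by (simp add: it)
    then show ?thesis by (simp add: LIMSEQ_const_iff)
  qed
  then show ?thesis by (intro ext mat_eq_from_bil)
qed

lemma lyap_unique:
  assumes p0: "\<forall>i j. 0 \<le> p i j"
    and dec: "\<And>i a. (\<lambda>n. inner a ((Tst p M ^^ n) (\<lambda>_. mat 1) i *v a)) \<longlonglongrightarrow> 0"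
    and e1: "\<And>i. P1 i = C i + Tst p M P1 i" and e2: "\<And>i. P2 i = C i + Tst p M P2 i"
  shows "P1 = P2"
proof -
  have "(\<lambda>j. P1 j - P2 j) = (\<lambda>_. 0)"
  proof (rule fixed_zero[OF p0 dec])
    fix i show "Tst p M (\<lambda>j. P1 j - P2 j) i = P1 i - P2 i"
      using e1[of i] e2[of i] by (simp add: Tst_diff algebra_simps)
  qed
  then show ?thesis by (simp add: fun_eq_iff)
qed

lemma lyap_exists:
  fixes M :: "'m::finite \<Rightarrow> real^'n^'n"
  assumes p0: "\<forall>i j. 0 \<le> p i j"
    and dec: "\<And>i a. (\<lambda>n. inner a ((Tst p M ^^ n) (\<lambda>_. mat 1) i *v a)) \<longlonglongrightarrow> 0"
  shows "\<exists>P. \<forall>i. P i = C i + Tst p M P i"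
proof -
  define L :: "(real^'n^'n)^'m \<Rightarrow> (real^'n^'n)^'m" where
    "L v = (\<chi> i. v$i - Tst p M (\<lambda>j. v$j) i)" for v
  have lin: "linear L"
  proof (rule linearI)
    fix v w :: "(real^'n^'n)^'m" and c :: real
    show "L (v + w) = L v + L w" by (simp add: L_def vec_eq_iff Tst_add)
    show "L (c *\<^sub>R v) = c *\<^sub>R L v" by (simp add: L_def vec_eq_iff Tst_scale algebra_simps)
  qed
  have "inj L"
  proof (rule injI)
    fix v w assume "L v = L w"
    then have "\<And>i. v$i - Tst p M (\<lambda>j. v$j) i = w$i - Tst p M (\<lambda>j. w$j) i"
      by (simp add: L_def vec_eq_iff)
    then have "(\<lambda>j. v$j - w$j) = (\<lambda>_. 0)"
      by (intro fixed_zero[OF p0 dec]) (simp add: Tst_diff algebra_simps)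
    then show "v = w" by (simp add: vec_eq_iff fun_eq_iff)
  qed
  then have "surj L" by (rule eucl.linear_injective_imp_surjective[OF lin _ refl])
  then obtain v where v: "L v = (\<chi> i. C i)" by (metis surjD)
  show ?thesis
  proof (intro exI allI)
    fix i show "v$i = C i + Tst p M (\<lambda>j. v$j) i"
      using v by (simp add: L_def vec_eq_iff algebra_simps)
  qed
qed

lemma pd_nonneg: "pd S \<Longrightarrow> 0 \<le> inner x (S *v x)"
  unfolding pd_def by (cases "x = 0") (auto intro: less_imp_le)

lemma transpose_add': "transpose ((A::real^'n^'n) + B) = transpose A + transpose B"
  by (simp add: transpose_def vec_eq_iff)

lemma transpose_Eop: "transpose (Eop p Y i) = Eop p (\<lambda>j. transpose (Y j)) i"
  by (simp add: transpose_def vec_eq_iff Eop_def)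

lemma transpose_Tst: "transpose (Tst p M Y i) = Tst p M (\<lambda>j. transpose (Y j)) i"
  by (simp add: Tst_def matrix_transpose_mul matrix_mul_assoc transpose_Eop)

lemma quad_sandwich: "inner a ((transpose F ** (S::real^_^_) ** F) *v b) = inner (F *v a) (S *v (F *v b))"
  by (simp only: matrix_vector_mul_assoc[symmetric]) (rule inner_transpose_mv)

lemma iter_le:
  assumes p0: "\<forall>i j. 0 \<le> p i j"
    and Cpsd: "\<And>i a. 0 \<le> inner a (C i *v a)"
    and eq: "\<And>i. P i = C i + Tst p M P i"
  shows "inner a ((Tst p M ^^ n) P i *v a) \<le> inner a (P i *v a)"
proof (induction n arbitrary: i a)
  case 0 then show ?case by simp
next
  case (Suc n)
  have "inner a ((Tst p M ^^ Suc n) P i *v a) = (\<Sum>j\<in>UNIV. p i j * inner (M i *v a) ((Tst p M ^^ n) P j *v (M i *v a)))"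
    by (simp add: Tst_bil)
  also have "... \<le> (\<Sum>j\<in>UNIV. p i j * inner (M i *v a) (P j *v (M i *v a)))"
    by (rule sum_mono) (simp add: p0 mult_left_mono Suc.IH)
  also have "... = inner a (Tst p M P i *v a)" by (simp add: Tst_bil)
  also have "... = inner a (P i *v a) - inner a (C i *v a)"
    using arg_cong[OF eq[of i], of "\<lambda>X. inner a (X *v a)"]
    by (simp add: matrix_vector_mult_add_rdistrib inner_add_right)
  also have "... \<le> inner a (P i *v a)" using Cpsd[of a i] by simp
  finally show ?case .
qed

lemma PK_facts:
  assumes p0: "\<forall>i j. 0 \<le> p i j"
    and dec: "\<And>i a. (\<lambda>n. inner a ((Tst p (Acl A B K) ^^ n) (\<lambda>_. mat 1) i *v a)) \<longlonglongrightarrow> 0"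
    and Qpd: "\<forall>i. pd (Q i)" and Rpd: "\<forall>i. pd (R i)"
  shows "\<forall>i. PK p A B Q R K i = Q i + transpose (K i) ** R i ** K i + Tst p (Acl A B K) (PK p A B Q R K) i"
    and "\<forall>i. transpose (PK p A B Q R K i) = PK p A B Q R K i"
    and "\<forall>i a. 0 \<le> inner a (PK p A B Q R K i *v a)"
proof -
  let ?M = "Acl A B K"
  define C where "C i = Q i + transpose (K i) ** R i ** K i" for i
  obtain P where P: "\<And>i. P i = C i + Tst p ?M P i" using lyap_exists[OF p0 dec, of C] by blast
  have "PK p A B Q R K = P"
    unfolding PK_def
  proof (rule the_equality)
    show "\<forall>i. P i = Q i + transpose (K i) ** R i ** K i + transpose (Acl A B K i) ** Eop p P i ** Acl A B K i"
      using P by (simp add: C_def Tst_def)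
    fix P' assume "\<forall>i. P' i = Q i + transpose (K i) ** R i ** K i + transpose (Acl A B K i) ** Eop p P' i ** Acl A B K i"
    then have "\<And>i. P' i = C i + Tst p ?M P' i" by (simp add: C_def Tst_def)
    then show "P' = P" by (rule lyap_unique[OF p0 dec _ P])
  qed
  then have PK: "\<And>i. PK p A B Q R K i = C i + Tst p ?M (PK p A B Q R K) i" using P by simp
  then show "\<forall>i. PK p A B Q R K i = Q i + transpose (K i) ** R i ** K i + Tst p (Acl A B K) (PK p A B Q R K) i"
    by (simp add: C_def)
  have Csym: "transpose (C i) = C i" for i
    using Qpd Rpd by (simp add: C_def pd_def transpose_add' matrix_transpose_mul matrix_mul_assoc)
  have "(\<lambda>i. transpose (PK p A B Q R K i)) = PK p A B Q R K"
  proof (rule lyap_unique[OF p0 dec _ PK])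
    fix i show "transpose (PK p A B Q R K i) = C i + Tst p ?M (\<lambda>i. transpose (PK p A B Q R K i)) i"
      using arg_cong[OF PK[of i], of transpose] by (simp add: transpose_add' Csym transpose_Tst)
  qed
  then show "\<forall>i. transpose (PK p A B Q R K i) = PK p A B Q R K i" by metis
  have Cpsd: "0 \<le> inner a (C i *v a)" for i a
    using pd_nonneg[of "Q i" a] pd_nonneg[of "R i" "K i *v a"] Qpd Rpd
    by (simp add: C_def matrix_vector_mult_add_rdistrib inner_add_right quad_sandwich)
  show "\<forall>i a. 0 \<le> inner a (PK p A B Q R K i *v a)"
  proof (intro allI)
    fix i a
    have lim: "(\<lambda>n. inner a ((Tst p ?M ^^ n) (PK p A B Q R K) i *v a)) \<longlonglongrightarrow> 0"
      by (rule decay_all[OF p0 dec])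
    have le: "\<And>n. inner a ((Tst p ?M ^^ n) (PK p A B Q R K) i *v a) \<le> inner a (PK p A B Q R K i *v a)"
      by (rule iter_le[OF p0 Cpsd PK])
    show "0 \<le> inner a (PK p A B Q R K i *v a)"
      using Lim_bounded[OF lim, of 0] le by simp
  qed
qed

lemma scaleR_mv: "((c::real) *\<^sub>R (M::real^_^_)) *v v = c *\<^sub>R (M *v v)"
  by (simp add: vec_eq_iff matrix_vector_mult_def sum_distrib_left mult.assoc real_scaleR_def)

lemma sym_swap: "transpose S = S \<Longrightarrow> inner x ((S::real^'n^'n) *v y) = inner y (S *v x)"
  by (metis inner_commute inner_transpose_mv)

lemma invertible_pd_like:
  fixes G :: "real^'n^'n"
  assumes "\<And>u. G *v u = 0 \<Longrightarrow> u = 0"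
  shows "G ** matrix_inv G = mat 1 \<and> matrix_inv G ** G = mat 1"
proof -
  have "inj ((*v) G)"
  proof (rule injI)
    fix u v assume "G *v u = G *v v"
    then have "G *v (u - v) = 0" by (simp add: matrix_vector_mult_diff_distrib)
    then have "u - v = 0" by (rule assms)
    then show "u = v" by simp
  qed
  then have "invertible G" using matrix_left_invertible_injective invertible_left_inverse by blast
  then have "\<exists>G'. G ** G' = mat 1 \<and> G' ** G = mat 1" by (simp add: invertible_def)
  then show ?thesis unfolding matrix_inv_def by (rule someI_ex)
qed

lemma improve:
  fixes A :: "'m::finite \<Rightarrow> real^'d^'d" and B :: "'m \<Rightarrow> real^'k^'d"
    and K :: "'m \<Rightarrow> real^'d^'k" and R :: "'m \<Rightarrow> real^'k^'k"
  assumes p0: "\<forall>i j. 0 \<le> p i j"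
    and Rpd: "\<forall>i. pd (R i)"
    and Peq: "\<forall>i. P i = Q i + transpose (K i) ** R i ** K i + Tst p (Acl A B K) P i"
    and Psym: "\<forall>i. transpose (P i) = P i"
    and Ppsd: "\<forall>i a. 0 \<le> inner a (P i *v a)"
    and eta: "0 < \<eta>" "\<eta> \<le> 1/2"
  shows "inner a (Tst p (Acl A B (\<lambda>i. K i - (2 * \<eta>) *\<^sub>R (matrix_inv (R i + transpose (B i) ** Eop p P i ** B i)
            ** ((R i + transpose (B i) ** Eop p P i ** B i) ** K i - transpose (B i) ** Eop p P i ** A i)))) P i *v a)
         \<le> inner a (P i *v a) - inner a (Q i *v a)"
proof -
  define E where "E = Eop p P i"
  define G where "G = R i + transpose (B i) ** E ** B i"
  define Gi where "Gi = matrix_inv G"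
  define H where "H = transpose (B i) ** E ** A i"
  define K' where "K' = K i - (2 * \<eta>) *\<^sub>R (Gi ** (G ** K i - H))"
  have Emv: "inner x (E *v y) = (\<Sum>j\<in>UNIV. p i j * inner x (P j *v y))" for x y
    by (simp add: E_def Eop_mv inner_sum_right)
  have Esym: "inner x (E *v y) = inner y (E *v x)" for x y
    unfolding Emv using Psym by (simp add: sym_swap)
  have Epsd: "0 \<le> inner x (E *v x)" for x
    unfolding Emv using p0 Ppsd by (simp add: sum_nonneg)
  have Rsym: "inner x (R i *v y) = inner y (R i *v x)" for x y
    using Rpd by (simp add: pd_def sym_swap)
  have Rpsd: "0 \<le> inner x (R i *v x)" for x using Rpd pd_nonneg by blast
  have Gmv: "G *v u = R i *v u + transpose (B i) *v (E *v (B i *v u))" for u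
    by (simp add: G_def matrix_vector_mult_add_rdistrib matrix_vector_mul_assoc matrix_mul_assoc del: transpose_matrix_vector)
  have Gin: "inner x (G *v u) = inner x (R i *v u) + inner (B i *v x) (E *v (B i *v u))" for x u
    by (simp add: Gmv inner_add_right inner_transpose_mv del: transpose_matrix_vector)
  have Gsym: "inner x (G *v u) = inner u (G *v x)" for x u
    unfolding Gin using Rsym Esym by simp
  have Gpsd: "0 \<le> inner x (G *v x)" for x
    unfolding Gin using Rpsd Epsd by (simp add: add_nonneg_nonneg)
  have Ginv: "G ** Gi = mat 1 \<and> Gi ** G = mat 1"
    unfolding Gi_def
  proof (rule invertible_pd_like)
    fix u assume "G *v u = 0"
    then have "inner u (G *v u) = 0" by simp
    then have "inner u (R i *v u) \<le> 0" unfolding Gin using Epsd[of "B i *v u"] by linarith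
    then show "u = 0" using Rpd unfolding pd_def by (meson not_le)
  qed
  define w where "w = A i *v a"
  define x where "x = K i *v a"
  define y where "y = Gi *v (H *v a)"
  have Gy: "G *v y = H *v a"
    using Ginv by (simp add: y_def matrix_vector_mul_assoc matrix_mul_assoc)
  have Ha: "H *v a = transpose (B i) *v (E *v w)"
    by (simp add: H_def w_def matrix_vector_mul_assoc matrix_mul_assoc del: transpose_matrix_vector)
  have cross: "inner u (G *v y) = inner (B i *v u) (E *v w)" for u
    by (simp add: Gy Ha inner_transpose_mv del: transpose_matrix_vector)
  define f where "f u = inner u (R i *v u) + inner (w - B i *v u) (E *v (w - B i *v u))" for u
  have fid: "f u = inner (u - y) (G *v (u - y)) - inner y (G *v y) + inner w (E *v w)" for u
  proof -
    have "inner (u - y) (G *v (u - y)) = inner u (G *v u) - 2 * inner u (G *v y) + inner y (G *v y)"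
      using Gsym[of y u] by (simp add: matrix_vector_mult_diff_distrib inner_diff_left inner_diff_right)
    moreover have "f u = inner u (R i *v u) + inner w (E *v w) - 2 * inner (B i *v u) (E *v w) + inner (B i *v u) (E *v (B i *v u))"
      using Esym[of w "B i *v u"]
      by (simp add: f_def matrix_vector_mult_diff_distrib inner_diff_left inner_diff_right)
    moreover have "inner u (G *v u) = inner u (R i *v u) + inner (B i *v u) (E *v (B i *v u))" by (rule Gin)
    moreover have "inner u (G *v y) = inner (B i *v u) (E *v w)" by (rule cross)
    ultimately show ?thesis by linarith
  qed
  have K'a: "K' *v a = x - (2 * \<eta>) *\<^sub>R (x - y)"
  proof -
    have "K' *v a = x - (2 * \<eta>) *\<^sub>R (Gi *v (G *v x - H *v a))"
      by (simp add: K'_def x_def matrix_vector_mult_diff_rdistrib matrix_vector_mult_diff_distrib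
          scaleR_mv matrix_vector_mul_assoc[symmetric])
    also have "Gi *v (G *v x - H *v a) = x - y"
      using Ginv by (simp add: matrix_vector_mult_diff_distrib matrix_vector_mul_assoc y_def)
    finally show ?thesis .
  qed
  define x' where "x' = K' *v a"
  have x'y: "x' - y = (1 - 2 * \<eta>) *\<^sub>R (x - y)"
    by (simp add: x'_def K'a algebra_simps)
  have lhs: "inner a (Tst p (Acl A B (\<lambda>i. K i - (2 * \<eta>) *\<^sub>R (matrix_inv (R i + transpose (B i) ** Eop p P i ** B i)
            ** ((R i + transpose (B i) ** Eop p P i ** B i) ** K i - transpose (B i) ** Eop p P i ** A i)))) P i *v a)
      = inner (w - B i *v x') (E *v (w - B i *v x'))"
  proof -
    have M'a: "Acl A B (\<lambda>i. K i - (2 * \<eta>) *\<^sub>R (matrix_inv (R i + transpose (B i) ** Eop p P i ** B i)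
            ** ((R i + transpose (B i) ** Eop p P i ** B i) ** K i - transpose (B i) ** Eop p P i ** A i))) i *v a
         = w - B i *v x'"
      by (simp add: Acl_def E_def G_def Gi_def H_def K'_def x'_def w_def
        matrix_vector_mult_diff_rdistrib matrix_vector_mul_assoc[symmetric] del: transpose_matrix_vector)
    show ?thesis unfolding Tst_def quad_sandwich M'a E_def ..
  qed
  have rhs: "inner a (P i *v a) - inner a (Q i *v a) = f x"
    using arg_cong[OF spec[OF Peq, of i], of "\<lambda>X. inner a (X *v a)"]
    by (simp add: f_def Tst_def quad_sandwich Acl_def E_def x_def w_def
        matrix_vector_mult_add_rdistrib inner_add_right
        matrix_vector_mult_diff_rdistrib matrix_vector_mul_assoc del: transpose_matrix_vector)
  have c1: "(1 - 2 * \<eta>)^2 \<le> 1" by (rule power_le_one) (use eta in auto)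
  have "inner (x' - y) (G *v (x' - y)) = (1 - 2 * \<eta>)^2 * inner (x - y) (G *v (x - y))"
    by (simp add: x'y matrix_vector_mult_scaleR power2_eq_square)
  also have "... \<le> inner (x - y) (G *v (x - y))"
    using c1 Gpsd[of "x - y"] by (simp add: mult_left_le_one_le)
  finally have "f x' \<le> f x" by (simp add: fid)
  then have "inner (w - B i *v x') (E *v (w - B i *v x')) \<le> f x"
    using Rpsd[of x'] by (simp add: f_def)
  then show ?thesis using lhs rhs by simp
qed

lemma pd_lower:
  fixes S :: "real^'n^'n"
  assumes "pd S"
  shows "\<exists>q>0. \<forall>a. q * inner a a \<le> inner a (S *v a)"
proof -
  have ne: "sphere (0::real^'n) 1 \<noteq> {}"
    using norm_axis_1 by (metis mem_sphere_0 empty_iff)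
  have cont: "continuous_on (sphere 0 1) (\<lambda>a::real^'n. inner a (S *v a))"
    by (intro continuous_intros linear_continuous_on matrix_vector_mul_bounded_linear)
  obtain x0 where x0: "x0 \<in> sphere 0 1" "\<And>y. y \<in> sphere 0 1 \<Longrightarrow> inner x0 (S *v x0) \<le> inner y (S *v y)"
    using continuous_attains_inf[OF compact_sphere ne cont] by blast
  have "x0 \<noteq> 0" using x0(1) by auto
  then have qpos: "0 < inner x0 (S *v x0)" using assms unfolding pd_def by blast
  have "inner x0 (S *v x0) * inner a a \<le> inner a (S *v a)" for a
  proof (cases "a = 0")
    case True then show ?thesis by simp
  next
    case False
    define u where "u = (1 / norm a) *\<^sub>R a"
    have "u \<in> sphere 0 1" using False by (simp add: u_def)
    then have le: "inner x0 (S *v x0) \<le> inner u (S *v u)" by (rule x0(2))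
    have au: "a = norm a *\<^sub>R u" using False by (simp add: u_def)
    have "inner a (S *v a) = (norm a)^2 * inner u (S *v u)"
      by (subst (1 2) au) (simp add: matrix_vector_mult_scaleR power2_eq_square)
    moreover have "inner a a = (norm a)^2" by (simp add: power2_norm_eq_inner)
    moreover have "inner x0 (S *v x0) * (norm a)^2 \<le> inner u (S *v u) * (norm a)^2"
      by (rule mult_right_mono[OF le]) simp
    ultimately show ?thesis by (simp add: mult.commute)
  qed
  then show ?thesis using qpos by blast
qed

lemma pd_lower_all:
  fixes Q :: "'m::finite \<Rightarrow> real^'n^'n"
  assumes "\<forall>i. pd (Q i)"
  shows "\<exists>q>0. \<forall>i a. q * inner a a \<le> inner a (Q i *v a)"
proof -
  have "\<forall>i. \<exists>q>0. \<forall>a. q * inner a a \<le> inner a (Q i *v a)" using assms pd_lower by blast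
  then obtain qf where qf: "\<And>i. qf i > 0" "\<And>i a. qf i * inner a a \<le> inner a (Q i *v a)" by metis
  define q where "q = Min (range qf)"
  have "q > 0" unfolding q_def using qf(1) by (simp add: Min_gr_iff)
  moreover have "q * inner a a \<le> inner a (Q i *v a)" for i a
  proof -
    have "q \<le> qf i" unfolding q_def by (simp add: Min_le)
    then have "q * inner a a \<le> qf i * inner a a" by (simp add: mult_right_mono)
    then show ?thesis using qf(2)[of i a] by linarith
  qed
  ultimately show ?thesis by blast
qed

lemma lyap_decay:
  fixes M :: "'m::finite \<Rightarrow> real^'n^'n"
  assumes p0: "\<forall>i j. 0 \<le> p i j"
    and Qpd: "\<forall>i. pd (Q i)"
    and Ppsd: "\<forall>i a. 0 \<le> inner a (P i *v a)"
    and ineq: "\<And>i a. inner a (Tst p M P i *v a) \<le> inner a (P i *v a) - inner a (Q i *v a)"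
  shows "(\<lambda>n. inner a ((Tst p M ^^ n) (\<lambda>_. mat 1) i *v a)) \<longlonglongrightarrow> 0"
proof -
  obtain q where q: "q > 0" "\<And>i a. q * inner a a \<le> inner a (Q i *v a)"
    using pd_lower_all[OF Qpd] by blast
  obtain C where C: "C \<ge> 0" "\<And>i a b. \<bar>inner a (P i *v b)\<bar> \<le> C * (inner a a + inner b b)"
    using dom_base[of P] by blast
  define pp where "pp = 2 * C + 1"
  have pp: "pp > 0" using C(1) by (simp add: pp_def)
  have Pup: "inner a (P i *v a) \<le> pp * inner a a" for i a
  proof -
    have h1: "inner a (P i *v a) \<le> C * (inner a a + inner a a)"
      using C(2)[of a i a] by (metis abs_ge_self order_trans)
    have "pp * inner a a = C * (inner a a + inner a a) + inner a a" by (simp add: pp_def algebra_simps)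
    then show ?thesis using h1 inner_ge_zero[of a] by linarith
  qed
  define r where "r = max 0 (1 - q / pp)"
  have r: "0 \<le> r" "r < 1" using q pp by (auto simp: r_def)
  have TP0: "0 \<le> inner a (Tst p M P i *v a)" for i a
    by (simp add: Tst_bil p0 Ppsd sum_nonneg)
  have TPr: "inner a (Tst p M P i *v a) \<le> r * inner a (P i *v a)" for i a
  proof -
    have "q * inner a a \<ge> (q / pp) * inner a (P i *v a)"
      using Pup[of a i] q(1) pp by (simp add: field_simps mult_left_mono)
    then have "inner a (Tst p M P i *v a) \<le> (1 - q / pp) * inner a (P i *v a)"
      using ineq[of a i] q(2)[of a i] by (simp add: algebra_simps)
    moreover have "(1 - q / pp) * inner a (P i *v a) \<le> r * inner a (P i *v a)"
      unfolding r_def using Ppsd by (simp add: mult_right_mono)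
    ultimately show ?thesis by linarith
  qed
  have QP: "inner a (Q i *v a) \<le> inner a (P i *v a)" for i a
    using ineq[of a i] TP0[of a i] by linarith
  have Z0: "0 \<le> inner a ((Tst p M ^^ n) (\<lambda>_. mat 1) i *v a)" for n i a
  proof (induction n arbitrary: i a)
    case 0 then show ?case by simp
  next
    case (Suc n) show ?case using Suc.IH p0 by (simp add: Tst_bil sum_nonneg)
  qed
  have Zle: "inner a ((Tst p M ^^ n) (\<lambda>_. mat 1) i *v a) \<le> (1/q) * r^n * inner a (P i *v a)" for n i a
  proof (induction n arbitrary: i a)
    case 0
    have "inner a a \<le> (1/q) * inner a (Q i *v a)" using q by (simp add: field_simps)
    also have "... \<le> (1/q) * inner a (P i *v a)" using QP[of a i] q(1) by (simp add: divide_right_mono)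
    finally show ?case by simp
  next
    case (Suc n)
    have "inner a ((Tst p M ^^ Suc n) (\<lambda>_. mat 1) i *v a)
        = (\<Sum>j\<in>UNIV. p i j * inner (M i *v a) ((Tst p M ^^ n) (\<lambda>_. mat 1) j *v (M i *v a)))"
      by (simp add: Tst_bil)
    also have "... \<le> (\<Sum>j\<in>UNIV. p i j * ((1/q) * r^n * inner (M i *v a) (P j *v (M i *v a))))"
      by (rule sum_mono, rule mult_left_mono[OF Suc.IH]) (simp add: p0)
    also have "... = (1/q) * r^n * inner a (Tst p M P i *v a)"
      by (simp add: Tst_bil sum_distrib_left mult_ac)
    also have "... \<le> (1/q) * r^n * (r * inner a (P i *v a))"
      by (rule mult_left_mono[OF TPr]) (use q(1) r(1) in simp)
    also have "... = (1/q) * r^Suc n * inner a (P i *v a)" by simp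
    finally show ?case .
  qed
  show ?thesis
  proof (rule Lim_null_comparison)
    show "\<forall>\<^sub>F n in sequentially. norm (inner a ((Tst p M ^^ n) (\<lambda>_. mat 1) i *v a)) \<le> (1/q) * r^n * inner a (P i *v a)"
      using Z0 Zle by simp
    show "(\<lambda>n. (1/q) * r^n * inner a (P i *v a)) \<longlonglongrightarrow> 0"
      using r by (intro tendsto_mult_left_zero tendsto_mult_right_zero LIMSEQ_realpow_zero)
  qed
qed

theorem lemma6:
  fixes p :: "'m::finite \<Rightarrow> 'm \<Rightarrow> real"
    and A :: "'m \<Rightarrow> real^'d^'d" and B :: "'m \<Rightarrow> real^'k^'d"
    and Q :: "'m \<Rightarrow> real^'d^'d" and R :: "'m \<Rightarrow> real^'k^'k"
    and K :: "'m \<Rightarrow> real^'d^'k" and \<eta> :: real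
  assumes "stochastic p"
    and "\<exists>K0. ms_stable p A B K0"
    and "\<forall>i. pd (Q i)" and "\<forall>i. pd (R i)"
    and "ms_stable p A B K"
    and "0 < \<eta>" and "\<eta> \<le> 1/2"
  shows "ms_stable p A B (\<lambda>i. K i - (2 * \<eta>) *\<^sub>R
           (matrix_inv (R i + transpose (B i) ** Eop p (PK p A B Q R K) i ** B i)
            ** LK p A B Q R K i))"
proof -
  have p0: "\<forall>i j. 0 \<le> p i j" using assms(1) by (simp add: stochastic_def)
  note decK = decay_from_stable[OF assms(5)]
  note PKf = PK_facts[OF p0 decK assms(3) assms(4)]
  let ?P = "PK p A B Q R K"
  let ?K' = "\<lambda>i. K i - (2 * \<eta>) *\<^sub>R (matrix_inv (R i + transpose (B i) ** Eop p ?P i ** B i)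
            ** ((R i + transpose (B i) ** Eop p ?P i ** B i) ** K i - transpose (B i) ** Eop p ?P i ** A i))"
  have ineq: "inner a (Tst p (Acl A B ?K') ?P i *v a) \<le> inner a (?P i *v a) - inner a (Q i *v a)" for i a
    by (rule improve[OF p0 assms(4) PKf assms(6) assms(7)])
  have dec': "(\<lambda>n. inner a ((Tst p (Acl A B ?K') ^^ n) (\<lambda>_. mat 1) i *v a)) \<longlonglongrightarrow> 0" for i a
    by (rule lyap_decay[OF p0 assms(3) PKf(3) ineq])
  have "ms_stable p A B ?K'"
    unfolding ms_stable_def moment_eq
    by (intro allI impI tendsto_null_sum stable_from_decay[OF p0 dec'])
  then show ?thesis by (simp add: LK_def)
qed

end
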